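(* Let $\lambda$ be a nonzero real number and $D=\frac{d}{dx}$. For every integer $n\ge 0$ and every $x$ with $|\lambda x|<1$, $$\mathrm{bel}_{n,\lambda}(x)\,e_{\lambda}(x)=(xD)^{n}e_{\lambda}(x)=\sum_{k=0}^{\infty}\frac{(1)_{k,\lambda}}{k!}k^{n}x^{k}.$$
   Context: For nonzero $\lambda\in\mathbb{R}$, $e_{\lambda}(t)=(1+\lambda t)^{1/\lambda}$, and $(1)_{0,\lambda}=1$, $(1)_{k,\lambda}=1(1-\lambda)\cdots(1-(k-1)\lambda)$ for $k\ge1$, so that $e_\lambda(x)=\sum_{k\ge0}(1)_{k,\lambda}\frac{x^k}{k!}$. The degenerate Bell polynomials of the second kind $\mathrm{bel}_{n,\lambda}(x)$ are defined by $e_{\lambda}(xe^{t})\cdot e_{\lambda}(x)^{-1}=\sum_{n=0}^{\infty}\mathrm{bel}_{n,\lambda}(x)\frac{t^{n}}{n!}$. Here $(xD)^n$ denotes the $n$-fold application of the operator $f\mapsto x f'(x)$. *)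

theory Defs
  imports "HOL-Analysis.Analysis"
begin

definition deg_exp :: "real \<Rightarrow> real \<Rightarrow> real" where
  "deg_exp lam t = (1 + lam * t) powr (1 / lam)"

definition deg_ff :: "real \<Rightarrow> nat \<Rightarrow> real" where
  "deg_ff lam k = (\<Prod>i<k. 1 - real i * lam)"

definition deg_bel :: "real \<Rightarrow> nat \<Rightarrow> real \<Rightarrow> real" where
  "deg_bel lam n x = (THE c :: nat \<Rightarrow> real. \<exists>r>0. \<forall>t. \<bar>t\<bar> < r \<longrightarrow>
      ((\<lambda>m. c m * t ^ m / fact m) sums (deg_exp lam (x * exp t) / deg_exp lam x))) n"

definition xD :: "(real \<Rightarrow> real) \<Rightarrow> real \<Rightarrow> real" where
  "xD f = (\<lambda>y. y * deriv f y)"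

end

theory Submission
  imports Defs
begin

lemma coeff_eq:
  assumes "lam \<noteq> 0"
  shows "((1/lam) gchoose k) * lam^k = deg_ff lam k / fact k"
proof -
  have "((1/lam) gchoose k) * lam^k = (\<Prod>i=0..<k. (1/lam - of_nat i)) / fact k * (\<Prod>i=0..<k. lam)"
    by (simp add: gbinomial_prod_rev)
  also have "\<dots> = (\<Prod>i=0..<k. (1/lam - of_nat i) * lam) / fact k"
    by (simp add: prod.distrib)
  also have "\<dots> = deg_ff lam k / fact k"
    unfolding deg_ff_def using assms
    by (simp add: algebra_simps atLeast0LessThan)
  finally show ?thesis .
qed

lemma base_sums:
  assumes "lam \<noteq> 0" "\<bar>lam * y\<bar> < 1"
  shows "(\<lambda>k. deg_ff lam k / fact k * y^k) sums deg_exp lam y"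
proof -
  have "(\<lambda>k. ((1/lam) gchoose k) * (lam*y)^k) sums (1 + lam*y) powr (1/lam)"
    using gen_binomial_real assms(2) by blast
  moreover have "((1/lam) gchoose k) * (lam*y)^k = deg_ff lam k / fact k * y^k" for k
  proof -
    have "((1/lam) gchoose k) * (lam*y)^k = (((1/lam) gchoose k) * lam^k) * y^k"
      by (simp add: power_mult_distrib mult_ac)
    then show ?thesis using coeff_eq[OF assms(1), of k] by simp
  qed
  ultimately show ?thesis unfolding deg_exp_def by simp
qed

lemma powser_unique:
  fixes d :: "nat \<Rightarrow> real"
  assumes "r > 0" and "\<And>t. \<bar>t\<bar> < r \<Longrightarrow> (\<lambda>m. d m * t^m) sums 0"
  shows "d k = 0"
proof (induction k rule: less_induct)
  case (less k)
  have "(\<lambda>m. d (m+k) * t^m) sums 0" if "t \<noteq> 0" "norm t < r" for t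
  proof -
    have "(\<lambda>m. d (m+k) * t^(m+k)) sums (0 - (\<Sum>m<k. d m * t^m))"
      using sums_split_initial_segment[OF assms(2)[of t], of k] that by simp
    also have "(\<Sum>m<k. d m * t^m) = 0" using less by simp
    finally have "(\<lambda>m. d (m+k) * t^(m+k) / t^k) sums (0 / t^k)"
      by (intro sums_divide) simp
    then show ?thesis using that by (simp add: power_add)
  qed
  note h = this
  have "((\<lambda>_. 0::real) \<longlongrightarrow> (\<lambda>m. d (m+k)) 0) (at (0::real))"
    by (rule powser_limit_0_strong[OF assms(1), where a="\<lambda>m. d(m+k)"]) (use h in auto)
  then show ?case using tendsto_const_iff by (metis add_0 at_neq_bot tendsto_unique tendsto_const)
qed

definition pcoef :: "real \<Rightarrow> nat \<Rightarrow> nat \<Rightarrow> real" where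
  "pcoef lam n k = deg_ff lam k / fact k * real k ^ n"

lemma diffs_pcoef: "diffs (pcoef lam n) k * y^k * y = pcoef lam (Suc n) (Suc k) * y^(Suc k)"
  by (simp add: diffs_def pcoef_def mult_ac)

lemma pcoef_summable:
  assumes "lam \<noteq> 0" "\<bar>y\<bar> < 1/\<bar>lam\<bar>"
  shows "summable (\<lambda>k. pcoef lam n k * y^k)"
  using assms(2)
proof (induction n arbitrary: y)
  case 0
  have "\<bar>lam * y\<bar> < 1" using 0 assms(1) by (simp add: abs_mult field_simps)
  from sums_summable[OF base_sums[OF assms(1) this]] show ?case by (simp add: pcoef_def)
next
  case (Suc n)
  have "summable (\<lambda>k. diffs (pcoef lam n) k * y^k)"
    by (rule termdiff_converges[where K="1/\<bar>lam\<bar>"]) (use Suc in auto)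
  then have "summable (\<lambda>k. diffs (pcoef lam n) k * y^k * y)" by (rule summable_mult2)
  then have "summable (\<lambda>k. pcoef lam (Suc n) (Suc k) * y^(Suc k))" by (simp only: diffs_pcoef)
  then show ?case by (rule summable_Suc_iff[where f="\<lambda>k. pcoef lam (Suc n) k * y^k", THEN iffD1])
qed

lemma xD_Suc: "(xD ^^ Suc n) f y = y * deriv ((xD ^^ n) f) y"
proof -
  have "xD g y = y * deriv g y" for g by (simp add: xD_def)
  then show ?thesis by simp
qed

lemma xD_iter:
  assumes "lam \<noteq> 0" "\<bar>y\<bar> < 1/\<bar>lam\<bar>"
  shows "(xD ^^ n) (deg_exp lam) y = (\<Sum>k. pcoef lam n k * y^k)"
  using assms(2)
proof (induction n arbitrary: y)
  case 0
  have "\<bar>lam * y\<bar> < 1" using 0 assms(1) by (simp add: abs_mult field_simps)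
  from sums_unique[OF base_sums[OF assms(1) this]] show ?case by (simp add: pcoef_def)
next
  case (Suc n)
  let ?S = "\<lambda>z. \<Sum>k. pcoef lam n k * z^k"
  have d: "(?S has_field_derivative (\<Sum>k. diffs (pcoef lam n) k * y^k)) (at y)"
    by (rule termdiffs_strong'[where K="1/\<bar>lam\<bar>"]) (use Suc pcoef_summable[OF assms(1)] in auto)
  have "((xD ^^ n) (deg_exp lam) has_field_derivative (\<Sum>k. diffs (pcoef lam n) k * y^k)) (at y)"
    by (rule has_field_derivative_transform_within_open[OF d, where S="ball 0 (1/\<bar>lam\<bar>)"])
       (use Suc in auto)
  then have dd: "deriv ((xD ^^ n) (deg_exp lam)) y = (\<Sum>k. diffs (pcoef lam n) k * y^k)"
    by (rule DERIV_imp_deriv)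
  have s1: "(\<lambda>k. diffs (pcoef lam n) k * y^k) sums (\<Sum>k. diffs (pcoef lam n) k * y^k)"
  proof (rule summable_sums)
    show "summable (\<lambda>k. diffs (pcoef lam n) k * y^k)"
      by (rule termdiff_converges[where K="1/\<bar>lam\<bar>"]) (use Suc pcoef_summable[OF assms(1)] in auto)
  qed
  have "(\<lambda>k. diffs (pcoef lam n) k * y^k * y) sums ((\<Sum>k. diffs (pcoef lam n) k * y^k) * y)"
    by (rule sums_mult2[OF s1])
  then have "(\<lambda>k. pcoef lam (Suc n) (Suc k) * y^(Suc k)) sums ((\<Sum>k. diffs (pcoef lam n) k * y^k) * y)"
    by (simp only: diffs_pcoef)
  then have "(\<lambda>k. pcoef lam (Suc n) k * y^k) sums ((\<Sum>k. diffs (pcoef lam n) k * y^k) * y + pcoef lam (Suc n) 0 * y^0)"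
    by (rule sums_Suc_iff[where f="\<lambda>k. pcoef lam (Suc n) k * y^k", THEN iffD1])
  moreover have "pcoef lam (Suc n) 0 = 0" by (simp add: pcoef_def)
  ultimately have "(\<lambda>k. pcoef lam (Suc n) k * y^k) sums (y * deriv ((xD ^^ n) (deg_exp lam)) y)"
    using dd by (simp add: mult.commute)
  then show ?case unfolding xD_Suc by (simp add: sums_iff)
qed

lemma exp_has_sum:
  fixes a s :: real
  shows "((\<lambda>m. a * s^m / fact m) has_sum (a * exp s)) UNIV"
proof -
  have "(\<lambda>m. s^m / fact m) sums exp s" using exp_converges[of s] by (simp add: divide_inverse mult_ac)
  then have "(\<lambda>m. a * (s^m / fact m)) sums (a * exp s)" by (rule sums_mult)
  moreover have "summable (\<lambda>m. norm (a * (s^m / fact m)))"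
  proof -
    have "summable (\<lambda>m. \<bar>s\<bar>^m / fact m)" using exp_converges[of "\<bar>s\<bar>"] sums_summable
      by (simp add: divide_inverse mult_ac) blast
    then have "summable (\<lambda>m. \<bar>a\<bar> * (\<bar>s\<bar>^m / fact m))" by (rule summable_mult)
    then show ?thesis by (simp add: abs_mult power_abs)
  qed
  ultimately show ?thesis using norm_summable_imp_has_sum by fastforce
qed

lemma dbl:
  assumes lam: "lam \<noteq> 0" and w: "\<bar>x\<bar> * exp \<bar>t\<bar> < 1/\<bar>lam\<bar>"
  shows "(\<lambda>m. t^m / fact m * (\<Sum>k. pcoef lam m k * x^k)) sums deg_exp lam (x * exp t)"
proof -
  define K where "K = 1/\<bar>lam\<bar>"
  define w where "w = \<bar>x\<bar> * exp \<bar>t\<bar>"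
  define z where "z = (w + K) / 2"
  have wK: "w < K" using w unfolding w_def K_def .
  have w0: "0 \<le> w" unfolding w_def by simp
  have xw: "\<bar>x\<bar> \<le> w" unfolding w_def by (simp add: mult_le_cancel_left1)
  have zK: "\<bar>z\<bar> < K" "w < \<bar>z\<bar>" using wK w0 unfolding z_def by auto
  define c where "c = (\<lambda>k. deg_ff lam k / fact k)"
  define f where "f = (\<lambda>(k::nat,m::nat). c k * x^k * (real k * t)^m / fact m)"
  have fk: "((\<lambda>m. f (k,m)) has_sum (c k * x^k * exp (real k * t))) UNIV" for k
    using exp_has_sum[of "c k * x^k" "real k * t"] unfolding f_def by simp
  have nfk: "((\<lambda>m. norm (f (k,m))) has_sum (\<bar>c k\<bar> * w^k)) UNIV" for k
  proof -
    have "((\<lambda>m. \<bar>c k * x^k\<bar> * \<bar>real k * t\<bar>^m / fact m) has_sum (\<bar>c k * x^k\<bar> * exp \<bar>real k * t\<bar>)) UNIV"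
      by (rule exp_has_sum)
    moreover have "\<bar>c k * x^k\<bar> * exp \<bar>real k * t\<bar> = \<bar>c k\<bar> * w^k"
      unfolding w_def by (simp add: abs_mult power_abs power_mult_distrib exp_of_nat_mult[symmetric])
    moreover have "(\<lambda>m. norm (f (k,m))) = (\<lambda>m. \<bar>c k * x^k\<bar> * \<bar>real k * t\<bar>^m / fact m)"
      unfolding f_def by (simp add: abs_mult power_abs)
    ultimately show ?thesis by (simp only:)
  qed
  have sz: "summable (\<lambda>k. c k * z^k)"
    using pcoef_summable[OF lam, of z 0] zK unfolding K_def c_def pcoef_def by simp
  have sw: "summable (\<lambda>k. \<bar>c k\<bar> * w^k)"
    using powser_insidea[OF sz, of w] zK w0 by (simp add: abs_mult power_abs)
  have "(\<lambda>p. norm (f p)) summable_on Sigma UNIV (\<lambda>_. UNIV)"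
  proof (subst Infinite_Sum.abs_summable_on_Sigma_iff, intro conjI ballI)
    show "(\<lambda>m. norm (f (k, m))) summable_on UNIV" for k
      using nfk[of k] by (auto simp: summable_on_def)
    have "infsum (\<lambda>m. norm (f (k, m))) UNIV = \<bar>c k\<bar> * w^k" for k
      using nfk by (auto intro!: infsumI)
    moreover have "(\<lambda>k. norm (\<bar>c k\<bar> * w^k)) summable_on UNIV"
      using sw w0 by (subst summable_on_UNIV_nonneg_real_iff) auto
    ultimately show "(\<lambda>k. norm (infsum (\<lambda>m. norm (f (k, m))) UNIV)) summable_on UNIV" by (simp del: real_norm_def)
  qed
  then have "f summable_on UNIV \<times> UNIV" by (rule Infinite_Sum.abs_summable_summable)
  then obtain S where S: "(f has_sum S) (UNIV \<times> UNIV)" by (auto simp: summable_on_def)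
  have "((\<lambda>k. c k * x^k * exp (real k * t)) has_sum S) UNIV"
    by (rule has_sum_SigmaD[OF S fk])
  then have sS: "(\<lambda>k. c k * x^k * exp (real k * t)) sums S" by (rule has_sum_imp_sums)
  have sE: "(\<lambda>k. c k * (x * exp t)^k) sums deg_exp lam (x * exp t)"
  proof -
    have "\<bar>x * exp t\<bar> \<le> w" unfolding w_def by (simp add: abs_mult mult_left_mono)
    then have "\<bar>lam\<bar> * \<bar>x * exp t\<bar> \<le> \<bar>lam\<bar> * w" by (simp add: mult_left_mono)
    also have "\<bar>lam\<bar> * w < \<bar>lam\<bar> * K" using wK lam by simp
    also have "\<bar>lam\<bar> * K = 1" using lam unfolding K_def by simp
    finally have "\<bar>lam * (x * exp t)\<bar> < 1" by (simp add: abs_mult)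
    from base_sums[OF lam this] show ?thesis unfolding c_def .
  qed
  have SE: "S = deg_exp lam (x * exp t)"
  proof -
    have "exp (real k * t) = exp t ^ k" for k by (rule exp_of_nat_mult)
    then show ?thesis using sS sE by (simp add: power_mult_distrib sums_unique2 mult.assoc)
  qed
  from S have S': "((\<lambda>(m,k). f (k,m)) has_sum S) (UNIV \<times> UNIV)" by (subst (asm) has_sum_swap)
  have gm: "((\<lambda>k. f (k,m)) has_sum (t^m / fact m * (\<Sum>k. pcoef lam m k * x^k))) UNIV" for m
  proof -
    have sx: "summable (\<lambda>k. pcoef lam m k * x^k)"
      using pcoef_summable[OF lam, of x m] xw wK unfolding K_def by simp
    have sz': "summable (\<lambda>k. pcoef lam m k * z^k)"
      using pcoef_summable[OF lam, of z m] zK unfolding K_def by simp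
    have "summable (\<lambda>k. norm (pcoef lam m k * x^k))"
      using powser_insidea[OF sz', of x] zK xw by simp
    from norm_summable_imp_has_sum[OF this summable_sums[OF sx]]
    have "((\<lambda>k. t^m / fact m * (pcoef lam m k * x^k)) has_sum (t^m / fact m * (\<Sum>k. pcoef lam m k * x^k))) UNIV"
      by (rule has_sum_cmult_right)
    moreover have "t^m / fact m * (pcoef lam m k * x^k) = f (k,m)" for k
      unfolding f_def c_def pcoef_def by (simp add: power_mult_distrib mult_ac)
    ultimately show ?thesis by simp
  qed
  have "((\<lambda>m. t^m / fact m * (\<Sum>k. pcoef lam m k * x^k)) has_sum S) UNIV"
    by (rule has_sum_SigmaD[OF S']) (use gm in simp)
  then show ?thesis using SE has_sum_imp_sums by blast
qed

theorem theorem5: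
  fixes lam x :: real and n :: nat
  assumes "lam \<noteq> 0" and "\<bar>lam * x\<bar> < 1"
  shows "deg_bel lam n x * deg_exp lam x = (xD ^^ n) (deg_exp lam) x
    \<and> ((\<lambda>k. deg_ff lam k / fact k * real k ^ n * x ^ k) sums ((xD ^^ n) (deg_exp lam) x))"
proof -
  note lam = assms(1)
  define E where "E = deg_exp lam x"
  define a where "a = \<bar>lam * x\<bar>"
  have a0: "0 \<le> a" and a1: "a < 1" using assms(2) unfolding a_def by auto
  have "1 + lam * x > 0" using assms(2) by linarith
  then have E0: "E > 0" unfolding E_def deg_exp_def by simp
  have xK: "\<bar>x\<bar> < 1/\<bar>lam\<bar>" using assms lam by (simp add: abs_mult field_simps)
  have ser: "(\<lambda>k. deg_ff lam k / fact k * real k ^ m * x ^ k) sums ((xD ^^ m) (deg_exp lam) x)" for m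
  proof -
    have "(\<lambda>k. pcoef lam m k * x^k) sums (\<Sum>k. pcoef lam m k * x^k)"
      using pcoef_summable[OF lam xK] by (rule summable_sums)
    then show ?thesis using xD_iter[OF lam xK, of m] by (simp add: pcoef_def)
  qed
  define c0 where "c0 = (\<lambda>m. (xD ^^ m) (deg_exp lam) x / E)"
  define P where "P = (\<lambda>c :: nat \<Rightarrow> real. \<exists>r>0. \<forall>t. \<bar>t\<bar> < r \<longrightarrow>
      ((\<lambda>m. c m * t ^ m / fact m) sums (deg_exp lam (x * exp t) / deg_exp lam x)))"
  have Pc0: "P c0"
    unfolding P_def
  proof (intro exI[of _ "ln (2 / (1 + a))"] conjI allI impI)
    show "0 < ln (2 / (1 + a))" using a0 a1 by simp
    fix t :: real assume t: "\<bar>t\<bar> < ln (2 / (1 + a))"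
    have "exp \<bar>t\<bar> < 2 / (1 + a)" using t a0
      by (metis exp_less_cancel_iff exp_ln divide_pos_pos add_pos_nonneg zero_less_numeral zero_less_one)
    then have "a * exp \<bar>t\<bar> \<le> a * (2 / (1 + a))" using a0 by (intro mult_left_mono) auto
    also have "\<dots> < 1" using a0 a1 by (simp add: field_simps)
    finally have "\<bar>lam\<bar> * (\<bar>x\<bar> * exp \<bar>t\<bar>) < 1" unfolding a_def by (simp add: abs_mult mult_ac)
    then have w: "\<bar>x\<bar> * exp \<bar>t\<bar> < 1/\<bar>lam\<bar>" using lam by (simp add: field_simps)
    have "(\<lambda>m. t^m / fact m * (\<Sum>k. pcoef lam m k * x^k) / E) sums (deg_exp lam (x * exp t) / E)"
      by (rule sums_divide[OF dbl[OF lam w]])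
    moreover have "t^m / fact m * (\<Sum>k. pcoef lam m k * x^k) / E = c0 m * t ^ m / fact m" for m
      unfolding c0_def using xD_iter[OF lam xK, of m] by (simp add: mult_ac)
    ultimately show "(\<lambda>m. c0 m * t ^ m / fact m) sums (deg_exp lam (x * exp t) / deg_exp lam x)"
      unfolding E_def by simp
  qed
  have uniq: "c = c0" if Pc: "P c" for c
  proof
    fix m
    obtain r1 where r1: "r1 > 0" "\<forall>t. \<bar>t\<bar> < r1 \<longrightarrow> ((\<lambda>m. c m * t ^ m / fact m) sums (deg_exp lam (x * exp t) / deg_exp lam x))"
      using Pc unfolding P_def by blast
    obtain r2 where r2: "r2 > 0" "\<forall>t. \<bar>t\<bar> < r2 \<longrightarrow> ((\<lambda>m. c0 m * t ^ m / fact m) sums (deg_exp lam (x * exp t) / deg_exp lam x))"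
      using Pc0 unfolding P_def by blast
    have "(\<lambda>m. c m / fact m - c0 m / fact m) m = 0"
    proof (rule powser_unique[where r="min r1 r2"])
      show "0 < min r1 r2" using r1 r2 by simp
      fix t :: real assume "\<bar>t\<bar> < min r1 r2"
      then have "(\<lambda>m. c m * t ^ m / fact m - c0 m * t ^ m / fact m) sums
          (deg_exp lam (x * exp t) / deg_exp lam x - deg_exp lam (x * exp t) / deg_exp lam x)"
        using r1 r2 by (intro sums_diff) auto
      then show "(\<lambda>m. (c m / fact m - c0 m / fact m) * t ^ m) sums 0"
        by (simp add: algebra_simps)
    qed
    then show "c m = c0 m" by simp
  qed
  have "deg_bel lam n x = c0 n"
  proof -
    have "(THE c. P c) = c0" using Pc0 uniq by (intro the1_equality) blast+
    then show ?thesis unfolding deg_bel_def P_def by simp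
  qed
  then have "deg_bel lam n x * deg_exp lam x = (xD ^^ n) (deg_exp lam) x"
    using E0 unfolding c0_def E_def by simp
  with ser[of n] show ?thesis by blast
qed

end
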